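(* Let $\mathcal{H}$ be a complex Hilbert space, let $N(\cdot)$ be a weakly unitarily invariant algebra norm on $\mathbb{B}(\mathcal{H})$, and let $T$ and $S$ be self-adjoint operators in $\mathbb{B}(\mathcal{H})$ with $\|T\|\le 1$ and $\|S\|\le 1$. Then, for each choice of sign, $$w_{N}(TS \pm ST) \leq \min\{w_{N}(T), w_{N}(S)\}\sup_{U\in\mathcal{U}}\big\{N(U) + N(U^* )\big\}.$$ In particular, if $N(\cdot)$ is a weakly unitarily invariant self-adjoint algebra norm, then $$w_{N}(TS \pm ST) \leq 2\min\{N(T), N(S)\}\sup_{U\in\mathcal{U}}N(U).$$
   Context: $\mathbb{B}(\mathcal{H})$ is the algebra of bounded linear operators on $\mathcal{H}$, $\|\cdot\|$ the usual operator norm, and $\mathcal{U}$ the group of unitary operators in $\mathbb{B}(\mathcal{H})$. A norm $N(\cdot)$ on $\mathbb{B}(\mathcal{H})$ is an algebra norm if $N(TS)\le N(T)N(S)$ for all $T,S$; self-adjoint if $N(T^* )=N(T)$ for all $T$; weakly unitarily invariant if $N(U^*TU)=N(T)$ for all $T\in\mathbb{B}(\mathcal{H})$, $U\in\mathcal{U}$. For $A\in\mathbb{B}(\mathcal{H})$, ${\rm Re}(A)=\frac{A+A^*}{2}$. The generalized numerical radius is $w_N(T)=\sup_{\theta\in\mathbb{R}} N\big({\rm Re}(e^{i\theta}T)\big)$. *)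

theory Defs
  imports "HOL-Analysis.Analysis"
begin

class scaleC =
  fixes scaleC :: "complex \<Rightarrow> 'a \<Rightarrow> 'a" (infixr \<open>*\<^sub>C\<close> 75)

class complex_vector = real_vector + scaleC +
  assumes scaleC_add_right: "a *\<^sub>C (x + y) = a *\<^sub>C x + a *\<^sub>C y"
    and scaleC_add_left: "(a + b) *\<^sub>C x = a *\<^sub>C x + b *\<^sub>C x"
    and scaleC_scaleC: "a *\<^sub>C (b *\<^sub>C x) = (a * b) *\<^sub>C x"
    and scaleC_one: "1 *\<^sub>C x = x"
    and scaleR_scaleC: "r *\<^sub>R x = complex_of_real r *\<^sub>C x"

text \<open>Complex inner product space; the inner product is conjugate-linear in the
first and linear in the second argument, and induces the norm.\<close>
class complex_inner = complex_vector + real_normed_vector +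
  fixes cinner :: "'a \<Rightarrow> 'a \<Rightarrow> complex"
  assumes cinner_commute: "cinner x y = cnj (cinner y x)"
    and cinner_add_right: "cinner x (y + z) = cinner x y + cinner x z"
    and cinner_scaleC_right: "cinner x (a *\<^sub>C y) = a * cinner x y"
    and cinner_ge_zero: "0 \<le> Re (cinner x x) \<and> Im (cinner x x) = 0"
    and cinner_eq_zero_iff: "cinner x x = 0 \<longleftrightarrow> x = 0"
    and norm_eq_sqrt_cinner: "norm x = sqrt (Re (cinner x x))"

class chilbert = complex_inner + complete_space

definition clinear_op :: "('a::complex_vector \<Rightarrow> 'a) \<Rightarrow> bool" where
  "clinear_op T \<longleftrightarrow> (\<forall>x y. T (x + y) = T x + T y) \<and> (\<forall>c x. T (c *\<^sub>C x) = c *\<^sub>C T x)"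

definition bounded_op :: "('a::complex_inner \<Rightarrow> 'a) \<Rightarrow> bool" where
  "bounded_op T \<longleftrightarrow> clinear_op T \<and> (\<exists>K. \<forall>x. norm (T x) \<le> K * norm x)"

definition opnorm :: "('a::complex_inner \<Rightarrow> 'a) \<Rightarrow> real" where
  "opnorm T = onorm T"

text \<open>Hilbert space adjoint (exists and is unique for bounded operators).\<close>
definition adj :: "('a::complex_inner \<Rightarrow> 'a) \<Rightarrow> ('a \<Rightarrow> 'a)" where
  "adj T = (SOME A. bounded_op A \<and> (\<forall>x y. cinner (T x) y = cinner x (A y)))"

definition self_adjoint_op :: "('a::complex_inner \<Rightarrow> 'a) \<Rightarrow> bool" where
  "self_adjoint_op T \<longleftrightarrow> bounded_op T \<and> adj T = T"

definition unitary_op :: "('a::complex_inner \<Rightarrow> 'a) \<Rightarrow> bool" where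
  "unitary_op U \<longleftrightarrow> bounded_op U \<and> adj U \<circ> U = id \<and> U \<circ> adj U = id"

definition ReOp :: "('a::complex_inner \<Rightarrow> 'a) \<Rightarrow> ('a \<Rightarrow> 'a)" where
  "ReOp A = (\<lambda>x. (1/2) *\<^sub>C (A x + adj A x))"

definition is_norm_on_ops :: "(('a::complex_inner \<Rightarrow> 'a) \<Rightarrow> real) \<Rightarrow> bool" where
  "is_norm_on_ops N \<longleftrightarrow>
     (\<forall>A. bounded_op A \<longrightarrow> 0 \<le> N A \<and> (N A = 0 \<longleftrightarrow> A = (\<lambda>x. 0))) \<and>
     (\<forall>A B. bounded_op A \<longrightarrow> bounded_op B \<longrightarrow> N (\<lambda>x. A x + B x) \<le> N A + N B) \<and>
     (\<forall>c A. bounded_op A \<longrightarrow> N (\<lambda>x. c *\<^sub>C A x) = cmod c * N A)"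

definition algebra_norm :: "(('a::complex_inner \<Rightarrow> 'a) \<Rightarrow> real) \<Rightarrow> bool" where
  "algebra_norm N \<longleftrightarrow> is_norm_on_ops N \<and>
     (\<forall>T S. bounded_op T \<longrightarrow> bounded_op S \<longrightarrow> N (T \<circ> S) \<le> N T * N S)"

definition selfadjoint_norm :: "(('a::complex_inner \<Rightarrow> 'a) \<Rightarrow> real) \<Rightarrow> bool" where
  "selfadjoint_norm N \<longleftrightarrow> (\<forall>T. bounded_op T \<longrightarrow> N (adj T) = N T)"

definition weakly_unitarily_invariant :: "(('a::complex_inner \<Rightarrow> 'a) \<Rightarrow> real) \<Rightarrow> bool" where
  "weakly_unitarily_invariant N \<longleftrightarrow>
     (\<forall>T U. bounded_op T \<longrightarrow> unitary_op U \<longrightarrow> N (adj U \<circ> T \<circ> U) = N T)"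

definition wN :: "(('a::complex_inner \<Rightarrow> 'a) \<Rightarrow> real) \<Rightarrow> ('a \<Rightarrow> 'a) \<Rightarrow> real" where
  "wN N T = (SUP \<theta>::real. N (ReOp (\<lambda>x. cis \<theta> *\<^sub>C T x)))"

end

theory Submission
  imports Defs "HOL-Computational_Algebra.Formal_Power_Series"
begin

section \<open>Basic complex inner product facts\<close>

lemma scaleC_zero_left[simp]: "(0::complex) *\<^sub>C (x::'a::complex_vector) = 0"
  using scaleR_scaleC[of 0 x] by simp

lemma scaleC_zero_right[simp]: "a *\<^sub>C (0::'a::complex_vector) = 0"
  using scaleC_add_right[of a "0::'a" 0] by simp

lemma scaleC_minus_right: "a *\<^sub>C (- x::'a::complex_vector) = - (a *\<^sub>C x)"
  using scaleC_add_right[of a x "-x"] by (simp add: eq_neg_iff_add_eq_0 add.commute)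

lemma scaleC_diff_right: "a *\<^sub>C (x - y::'a::complex_vector) = a *\<^sub>C x - a *\<^sub>C y"
  using scaleC_add_right[of a x "-y"] by (simp add: scaleC_minus_right)

lemma scaleC_minus_left: "(- a) *\<^sub>C (x::'a::complex_vector) = - (a *\<^sub>C x)"
  using scaleC_add_left[of a "-a" x] by (simp add: eq_neg_iff_add_eq_0 add.commute)

lemma scaleC_diff_left: "(a - b) *\<^sub>C (x::'a::complex_vector) = a *\<^sub>C x - b *\<^sub>C x"
  using scaleC_add_left[of a "-b" x] by (simp add: scaleC_minus_left)

lemma scaleC_one'[simp]: "1 *\<^sub>C (x::'a::complex_vector) = x"
  by (rule scaleC_one)

lemma scaleC_real: "complex_of_real r *\<^sub>C (x::'a::complex_vector) = r *\<^sub>R x"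
  by (simp add: scaleR_scaleC)

lemma scaleC_scaleR_comm: "a *\<^sub>C (r *\<^sub>R (x::'a::complex_vector)) = r *\<^sub>R (a *\<^sub>C x)"
  by (simp add: scaleR_scaleC scaleC_scaleC mult.commute)

lemma scaleC_sum_right: "a *\<^sub>C (sum f A) = (\<Sum>i\<in>A. a *\<^sub>C (f i::'a::complex_vector))"
  by (induction A rule: infinite_finite_induct) (auto simp: scaleC_add_right)

lemma cinner_add_left: "cinner (x + y) (z::'a::complex_inner) = cinner x z + cinner y z"
  by (metis cinner_add_right cinner_commute complex_cnj_add)

lemma cinner_scaleC_left: "cinner (a *\<^sub>C x) (y::'a::complex_inner) = cnj a * cinner x y"
  by (metis cinner_commute cinner_scaleC_right complex_cnj_cnj complex_cnj_mult)

lemma cinner_zero_right[simp]: "cinner x (0::'a::complex_inner) = 0"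
  using cinner_add_right[of x 0 0] by simp

lemma cinner_zero_left[simp]: "cinner (0::'a::complex_inner) x = 0"
  using cinner_add_left[of 0 0 x] by simp

lemma cinner_minus_right: "cinner x (- y::'a::complex_inner) = - cinner x y"
  using cinner_add_right[of x y "-y"] by (simp add: eq_neg_iff_add_eq_0 add.commute)

lemma cinner_minus_left: "cinner (- x) (y::'a::complex_inner) = - cinner x y"
  using cinner_add_left[of x "-x" y] by (simp add: eq_neg_iff_add_eq_0 add.commute)

lemma cinner_diff_right: "cinner x (y - z::'a::complex_inner) = cinner x y - cinner x z"
  using cinner_add_right[of x y "-z"] by (simp add: cinner_minus_right)

lemma cinner_diff_left: "cinner (x - y) (z::'a::complex_inner) = cinner x z - cinner y z"
  using cinner_add_left[of x "-y" z] by (simp add: cinner_minus_left)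

lemma cinner_scaleR_left: "cinner (r *\<^sub>R x) (y::'a::complex_inner) = of_real r * cinner x y"
  by (simp add: scaleR_scaleC cinner_scaleC_left)

lemma cinner_scaleR_right: "cinner x (r *\<^sub>R y::'a::complex_inner) = of_real r * cinner x y"
  by (simp add: scaleR_scaleC cinner_scaleC_right)

lemma cinner_self: "cinner x (x::'a::complex_inner) = complex_of_real ((norm x)\<^sup>2)"
proof -
  have "Im (cinner x x) = 0" "0 \<le> Re (cinner x x)" using cinner_ge_zero[of x] by auto
  moreover have "(norm x)\<^sup>2 = Re (cinner x x)"
    using norm_eq_sqrt_cinner[of x] calculation by simp
  ultimately show ?thesis by (simp add: complex_eq_iff)
qed

lemma norm_sq_cinner: "(norm x)\<^sup>2 = Re (cinner x (x::'a::complex_inner))"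
  by (simp add: cinner_self)

lemma norm_scaleC: "norm (a *\<^sub>C (x::'a::complex_inner)) = cmod a * norm x"
proof -
  have "cinner (a *\<^sub>C x) (a *\<^sub>C x) = (a * cnj a) * cinner x x"
    by (simp add: cinner_scaleC_left cinner_scaleC_right mult_ac)
  also have "a * cnj a = complex_of_real ((cmod a)\<^sup>2)" by (simp only: complex_norm_square)
  finally have e: "cinner (a *\<^sub>C x) (a *\<^sub>C x) = complex_of_real ((cmod a)\<^sup>2) * cinner x x" .
  have "(norm (a *\<^sub>C x))\<^sup>2 = (cmod a * norm x)\<^sup>2"
    unfolding power_mult_distrib norm_sq_cinner[of "a *\<^sub>C x"] norm_sq_cinner[of x] e
    by simp
  then show ?thesis
    by (simp add: power2_eq_iff_nonneg)
qed

lemma norm_add_sq: "(norm (x + y))\<^sup>2 = (norm x)\<^sup>2 + (norm y)\<^sup>2 + 2 * Re (cinner x (y::'a::complex_inner))"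
proof -
  have "cinner y x = cnj (cinner x y)" by (rule cinner_commute)
  then have "Re (cinner y x) = Re (cinner x y)" by simp
  then show ?thesis
    by (simp add: norm_sq_cinner cinner_add_left cinner_add_right)
qed

lemma norm_diff_sq: "(norm (x - y))\<^sup>2 = (norm x)\<^sup>2 + (norm y)\<^sup>2 - 2 * Re (cinner x (y::'a::complex_inner))"
  using norm_add_sq[of x "-y"] by (simp add: cinner_minus_right)

lemma parallelogram: "(norm (x + y))\<^sup>2 + (norm (x - y))\<^sup>2 = 2 * (norm x)\<^sup>2 + 2 * (norm (y::'a::complex_inner))\<^sup>2"
  using norm_add_sq[of x y] norm_diff_sq[of x y] by simp

lemma proj_identity:
  fixes x y :: "'a::complex_inner"
  assumes "y \<noteq> 0"
  shows "(norm (x - (cinner y x / complex_of_real ((norm y)\<^sup>2)) *\<^sub>C y))\<^sup>2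
           = (norm x)\<^sup>2 - (cmod (cinner y x))\<^sup>2 / (norm y)\<^sup>2"
proof -
  have ny: "norm y > 0" using assms by simp
  define a where "a = cinner y x"
  define t where "t = a / complex_of_real ((norm y)\<^sup>2)"
  have "(norm (x - t *\<^sub>C y))\<^sup>2 = (norm x)\<^sup>2 + (cmod t * norm y)\<^sup>2 - 2 * Re (cinner x (t *\<^sub>C y))"
    by (simp add: norm_diff_sq norm_scaleC)
  also have "cinner x (t *\<^sub>C y) = t * cnj a"
    by (simp add: cinner_scaleC_right a_def cinner_commute[of x y])
  also have "t * cnj a = complex_of_real ((cmod a)\<^sup>2 / (norm y)\<^sup>2)"
  proof -
    have "t * cnj a = (a * cnj a) / complex_of_real ((norm y)\<^sup>2)" unfolding t_def by (rule times_divide_eq_left)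
    also have "a * cnj a = complex_of_real ((cmod a)\<^sup>2)" by (simp only: complex_norm_square)
    finally show ?thesis by (simp only: of_real_divide)
  qed
  also have "Re (complex_of_real ((cmod a)\<^sup>2 / (norm y)\<^sup>2)) = (cmod a)\<^sup>2 / (norm y)\<^sup>2"
    by (simp only: Re_complex_of_real)
  also have "(cmod t * norm y)\<^sup>2 = (cmod a)\<^sup>2 / (norm y)\<^sup>2"
  proof -
    have "cmod t = cmod a / (norm y)\<^sup>2" by (simp add: t_def norm_divide norm_power)
    moreover have "(c / n\<^sup>2 * n)\<^sup>2 = c\<^sup>2 / n\<^sup>2" if "(n::real) > 0" for c n
      using that by (simp add: power_divide power_mult_distrib power2_eq_square)
    ultimately show ?thesis using ny by simp
  qed
  finally show ?thesis unfolding t_def a_def by linarith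
qed

lemma cauchy_schwarz: "cmod (cinner x y) \<le> norm x * norm (y::'a::complex_inner)"
proof (cases "y = 0")
  case True then show ?thesis by simp
next
  case False
  then have ny: "norm y > 0" by simp
  define a where "a = cinner y x"
  have "0 \<le> (norm (x - (cinner y x / complex_of_real ((norm y)\<^sup>2)) *\<^sub>C y))\<^sup>2" by simp
  also have "\<dots> = (norm x)\<^sup>2 - (cmod a)\<^sup>2 / (norm y)\<^sup>2"
    using proj_identity[OF False] by (simp add: a_def)
  finally have "(cmod a)\<^sup>2 / (norm y)\<^sup>2 \<le> (norm x)\<^sup>2" by simp
  then have "(cmod a)\<^sup>2 \<le> (norm x * norm y)\<^sup>2"
    using ny by (simp add: pos_divide_le_eq power_mult_distrib)
  then have "cmod a \<le> norm x * norm y"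
    by (rule power2_le_imp_le) simp
  moreover have "cmod (cinner x y) = cmod a"
    by (simp add: a_def cinner_commute[of x y])
  ultimately show ?thesis by simp
qed

lemma cinner_ext:
  fixes u v :: "'a::complex_inner"
  assumes "\<And>x. cinner x u = cinner x v"
  shows "u = v"
proof -
  have "cinner (u - v) (u - v) = cinner (u - v) u - cinner (u - v) v" by (rule cinner_diff_right)
  also have "\<dots> = 0" using assms[of "u - v"] by (simp only: diff_self)
  finally have "u - v = 0" using cinner_eq_zero_iff by blast
  then show ?thesis by simp
qed

section \<open>Linear operators\<close>

lemma clinear_opD:
  assumes "clinear_op T"
  shows "T (x + y) = T x + T y" "T (c *\<^sub>C x) = c *\<^sub>C T x"
  using assms unfolding clinear_op_def by auto

lemma clinear_op_zero: "clinear_op T \<Longrightarrow> T 0 = 0"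
  using clinear_opD(2)[of T 0 0] by simp

lemma clinear_op_scaleR: "clinear_op T \<Longrightarrow> T (r *\<^sub>R x) = r *\<^sub>R T x"
  using clinear_opD(2)[of T "complex_of_real r" x] by (simp add: scaleR_scaleC)

lemma clinear_op_minus: "clinear_op T \<Longrightarrow> T (- x) = - T x"
  using clinear_op_scaleR[of T "-1" x] by simp

lemma clinear_op_diff: "clinear_op T \<Longrightarrow> T (x - y) = T x - T y"
  using clinear_opD(1)[of T x "-y"] clinear_op_minus[of T y] by simp

lemma bounded_op_clinear: "bounded_op T \<Longrightarrow> clinear_op T"
  unfolding bounded_op_def by simp

lemma bounded_op_bounded_linear:
  assumes "bounded_op T"
  shows "bounded_linear T"
proof -
  from assms obtain K where K: "\<And>x. norm (T x) \<le> K * norm x"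
    unfolding bounded_op_def by auto
  have c: "clinear_op T" using assms by (rule bounded_op_clinear)
  show ?thesis
    by (rule bounded_linear_intro[where K=K])
      (auto simp: clinear_opD[OF c] clinear_op_scaleR[OF c] K mult.commute)
qed

lemma bounded_op_norm: "bounded_op T \<Longrightarrow> norm (T x) \<le> opnorm T * norm x"
  unfolding opnorm_def by (rule onorm[OF bounded_op_bounded_linear])

lemma bounded_opI:
  assumes "clinear_op T" "\<And>x. norm (T x) \<le> K * norm x"
  shows "bounded_op T"
  using assms unfolding bounded_op_def by auto

lemma clinear_opI:
  assumes "\<And>x y. T (x + y) = T x + T y" "\<And>c x. T (c *\<^sub>C x) = c *\<^sub>C T x"
  shows "clinear_op T"
  using assms unfolding clinear_op_def by auto

section \<open>Adjoints\<close>

definition is_adj :: "('a::complex_inner \<Rightarrow> 'a) \<Rightarrow> ('a \<Rightarrow> 'a) \<Rightarrow> bool" where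
  "is_adj T A \<longleftrightarrow> bounded_op A \<and> (\<forall>x y. cinner (T x) y = cinner x (A y))"

lemma is_adj_unique:
  assumes "is_adj T A" "is_adj T B"
  shows "A = B"
proof
  fix y
  show "A y = B y"
  proof (rule cinner_ext)
    fix x
    have "cinner x (A y) = cinner (T x) y" using assms(1) unfolding is_adj_def by simp
    also have "\<dots> = cinner x (B y)" using assms(2) unfolding is_adj_def by simp
    finally show "cinner x (A y) = cinner x (B y)" .
  qed
qed

lemma adj_eqI:
  assumes "is_adj T A"
  shows "adj T = A"
proof -
  from assms have "bounded_op A \<and> (\<forall>x y. cinner (T x) y = cinner x (A y))" unfolding is_adj_def .
  then have "is_adj T (adj T)" unfolding adj_def is_adj_def
    by (rule someI[where P="\<lambda>A. bounded_op A \<and> (\<forall>x y. cinner (T x) y = cinner x (A y))"])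
  then show ?thesis using assms is_adj_unique by blast
qed

lemma riesz:
  fixes f :: "'a::chilbert \<Rightarrow> complex"
  assumes add: "\<And>x y. f (x + y) = f x + f y"
    and sc: "\<And>c x. f (c *\<^sub>C x) = c * f x"
    and bd: "\<And>x. cmod (f x) \<le> K * norm x"
  shows "\<exists>z. \<forall>x. f x = cinner z x"
proof (cases "\<forall>x. f x = 0")
  case True
  then show ?thesis by (intro exI[of _ 0]) simp
next
  case False
  then obtain y0 where fy0: "f y0 \<noteq> 0" by auto
  have f0: "f 0 = 0" using sc[of 0 0] by simp
  have fminus: "f (- x) = - f x" for x
    using sc[of "-1" x] by (simp add: scaleC_minus_left)
  have fdiff: "f (x - y) = f x - f y" for x y
    using add[of x "-y"] fminus[of y] by simp
  have fR: "f (r *\<^sub>R x) = r *\<^sub>R f x" for r x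
    using sc[of "complex_of_real r" x] by (simp add: scaleR_scaleC scaleR_conv_of_real)
  have bl: "bounded_linear f"
    by (rule bounded_linear_intro[where K=K]) (auto simp: add fR bd mult.commute)
  define Kn where "Kn = {k. f k = 0}"
  define d where "d = Inf ((\<lambda>k. norm (y0 - k)) ` Kn)"
  have Kn0: "0 \<in> Kn" by (simp add: Kn_def f0)
  have bdd: "bdd_below ((\<lambda>k. norm (y0 - k)) ` Kn)"
    by (rule bdd_belowI[of _ 0]) auto
  have d_le: "d \<le> norm (y0 - k)" if "k \<in> Kn" for k
    unfolding d_def using bdd that by (rule cINF_lower)
  have d_nonneg: "0 \<le> d"
    unfolding d_def by (rule cINF_greatest) (use Kn0 in auto)
  have "\<exists>k\<in>Kn. norm (y0 - k) < sqrt (d\<^sup>2 + inverse (real (Suc n)))" for n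
  proof -
    have "d < sqrt (d\<^sup>2 + inverse (real (Suc n)))"
      using d_nonneg by (intro real_less_rsqrt) simp
    then have "Inf ((\<lambda>k. norm (y0 - k)) ` Kn) < sqrt (d\<^sup>2 + inverse (real (Suc n)))"
      by (simp add: d_def)
    then show ?thesis
      using cINF_less_iff[OF _ bdd] Kn0 by blast
  qed
  then obtain kk where kk: "\<And>n. kk n \<in> Kn" and
    kkd: "\<And>n. norm (y0 - kk n) < sqrt (d\<^sup>2 + inverse (real (Suc n)))"
    by metis
  have kkd2: "(norm (y0 - kk n))\<^sup>2 < d\<^sup>2 + inverse (real (Suc n))" for n
  proof -
    have "(norm (y0 - kk n))\<^sup>2 < (sqrt (d\<^sup>2 + inverse (real (Suc n))))\<^sup>2"
      using kkd[of n] by (intro power_strict_mono) auto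
    then show ?thesis by simp
  qed
  have Kn_mid: "(1/2) *\<^sub>R (a + b) \<in> Kn" if "a \<in> Kn" "b \<in> Kn" for a b
    using that by (simp add: Kn_def fR add)
  have cauchy_bound: "(norm (kk m - kk n))\<^sup>2 \<le> 2 * inverse (real (Suc m)) + 2 * inverse (real (Suc n))" for m n
  proof -
    define u where "u = y0 - kk m"
    define v where "v = y0 - kk n"
    have "u + v = 2 *\<^sub>R (y0 - (1/2) *\<^sub>R (kk m + kk n))"
      by (simp add: u_def v_def algebra_simps scaleR_2)
    then have "norm (u + v) = 2 * norm (y0 - (1/2) *\<^sub>R (kk m + kk n))" by simp
    moreover have "d \<le> norm (y0 - (1/2) *\<^sub>R (kk m + kk n))"
      by (intro d_le Kn_mid kk)
    ultimately have "2 * d \<le> norm (u + v)" by simp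
    then have "(2 * d)\<^sup>2 \<le> (norm (u + v))\<^sup>2"
      using d_nonneg by (intro power_mono) auto
    moreover have "u - v = kk n - kk m" by (simp add: u_def v_def)
    moreover have "(norm (u + v))\<^sup>2 + (norm (u - v))\<^sup>2 = 2 * (norm u)\<^sup>2 + 2 * (norm v)\<^sup>2"
      by (rule parallelogram)
    moreover have "(norm u)\<^sup>2 < d\<^sup>2 + inverse (real (Suc m))" unfolding u_def by (rule kkd2)
    moreover have "(norm v)\<^sup>2 < d\<^sup>2 + inverse (real (Suc n))" unfolding v_def by (rule kkd2)
    moreover have "norm (kk n - kk m) = norm (kk m - kk n)" by (rule norm_minus_commute)
    ultimately show ?thesis by (simp add: power_mult_distrib)
  qed
  have "Cauchy kk"
  proof (rule CauchyI)
    fix e :: real assume "0 < e"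
    then have "0 < e\<^sup>2 / 4" by simp
    then obtain M where M: "inverse (real (Suc M)) < e\<^sup>2 / 4"
      using reals_Archimedean by blast
    show "\<exists>M. \<forall>m\<ge>M. \<forall>n\<ge>M. norm (kk m - kk n) < e"
    proof (intro exI allI impI)
      fix m n assume mn: "M \<le> m" "M \<le> n"
      have im: "inverse (real (Suc m)) \<le> inverse (real (Suc M))"
        using mn by (intro le_imp_inverse_le) auto
      have inn: "inverse (real (Suc n)) \<le> inverse (real (Suc M))"
        using mn by (intro le_imp_inverse_le) auto
      have "(norm (kk m - kk n))\<^sup>2 < e\<^sup>2"
        using cauchy_bound[of m n] im inn M by linarith
      then show "norm (kk m - kk n) < e"
        using \<open>0 < e\<close> by (simp add: power_less_imp_less_base)
    qed
  qed
  then obtain p where lim: "kk \<longlonglongrightarrow> p"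
    using Cauchy_convergent_iff convergent_def by blast
  have "(\<lambda>n. f (kk n)) \<longlonglongrightarrow> f p"
    using bl lim by (rule bounded_linear.tendsto)
  moreover have "(\<lambda>n. f (kk n)) = (\<lambda>n. 0)" using kk by (simp add: Kn_def)
  ultimately have "f p = 0"
    using LIMSEQ_unique tendsto_const by metis
  then have pK: "p \<in> Kn" by (simp add: Kn_def)
  have "norm (y0 - p) \<le> d"
  proof (rule LIMSEQ_le)
    show "(\<lambda>n. norm (y0 - kk n)) \<longlonglongrightarrow> norm (y0 - p)"
      by (intro tendsto_intros lim)
    have "(\<lambda>n. sqrt (d\<^sup>2 + inverse (real (Suc n)))) \<longlonglongrightarrow> sqrt (d\<^sup>2 + 0)"
      by (intro tendsto_intros LIMSEQ_inverse_real_of_nat)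
    then show "(\<lambda>n. sqrt (d\<^sup>2 + inverse (real (Suc n)))) \<longlonglongrightarrow> d"
      using d_nonneg by simp
    show "\<exists>N. \<forall>n\<ge>N. norm (y0 - kk n) \<le> sqrt (d\<^sup>2 + inverse (real (Suc n)))"
      using kkd less_imp_le by blast
  qed
  then have pmin: "norm (y0 - p) \<le> norm (y0 - k)" if "k \<in> Kn" for k
    using d_le[OF that] by linarith
  define w where "w = y0 - p"
  have fw: "f w = f y0" using \<open>f p = 0\<close> by (simp add: w_def fdiff)
  then have w0: "w \<noteq> 0" using fy0 f0 by auto
  have orth: "cinner k w = 0" if "k \<in> Kn" for k
  proof (cases "k = 0")
    case True then show ?thesis by simp
  next
    case False
    define t where "t = cinner k w / complex_of_real ((norm k)\<^sup>2)"
    have "p + t *\<^sub>C k \<in> Kn" using that pK by (simp add: Kn_def add sc)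
    then have "norm w \<le> norm (w - t *\<^sub>C k)"
      using pmin[of "p + t *\<^sub>C k"] by (simp add: w_def algebra_simps)
    then have "(norm w)\<^sup>2 \<le> (norm (w - t *\<^sub>C k))\<^sup>2"
      by (intro power_mono) auto
    also have "\<dots> = (norm w)\<^sup>2 - (cmod (cinner k w))\<^sup>2 / (norm k)\<^sup>2"
      unfolding t_def by (rule proj_identity[OF False])
    finally have "(cmod (cinner k w))\<^sup>2 / (norm k)\<^sup>2 \<le> 0" by simp
    moreover have "(norm k)\<^sup>2 > 0" using False by simp
    ultimately have "(cmod (cinner k w))\<^sup>2 \<le> 0"
      by (simp add: divide_le_0_iff)
    then show ?thesis by simp
  qed
  have nw: "cinner w w \<noteq> 0" using w0 cinner_eq_zero_iff by blast
  show ?thesis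
  proof (intro exI allI)
    fix x
    have "f x *\<^sub>C w - f w *\<^sub>C x \<in> Kn"
      by (simp add: Kn_def fdiff sc mult.commute)
    then have "cinner (f x *\<^sub>C w - f w *\<^sub>C x) w = 0" by (rule orth)
    then have "cnj (f x) * cinner w w = cnj (f w) * cinner x w"
      by (simp add: cinner_diff_left cinner_scaleC_left)
    then have "f x * cnj (cinner w w) = f w * cnj (cinner x w)"
      by (metis complex_cnj_cnj complex_cnj_mult)
    then have "f x * cinner w w = f w * cinner w x"
      by (metis cinner_commute)
    then have "f x = f w / cinner w w * cinner w x"
      using nw by (simp add: field_simps)
    also have "\<dots> = cinner ((cnj (f w / cinner w w)) *\<^sub>C w) x"
      by (simp add: cinner_scaleC_left)
    finally show "f x = cinner ((cnj (f w / cinner w w)) *\<^sub>C w) x" .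
  qed
qed

lemma adj_exists:
  fixes T :: "'a::chilbert \<Rightarrow> 'a"
  assumes T: "bounded_op T"
  shows "\<exists>A. is_adj T A"
proof -
  have cT: "clinear_op T" using T by (rule bounded_op_clinear)
  have "\<exists>z. \<forall>x. cinner y (T x) = cinner z x" for y
  proof (rule riesz[where K="norm y * opnorm T"])
    show "cinner y (T (x1 + x2)) = cinner y (T x1) + cinner y (T x2)" for x1 x2
      by (simp add: clinear_opD[OF cT] cinner_add_right)
    show "cinner y (T (c *\<^sub>C x)) = c * cinner y (T x)" for c x
      by (simp add: clinear_opD[OF cT] cinner_scaleC_right)
    show "cmod (cinner y (T x)) \<le> norm y * opnorm T * norm x" for x
    proof -
      have "cmod (cinner y (T x)) \<le> norm y * norm (T x)" by (rule cauchy_schwarz)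
      also have "\<dots> \<le> norm y * (opnorm T * norm x)"
        by (intro mult_left_mono bounded_op_norm[OF T]) simp
      finally show ?thesis by (simp add: mult.assoc)
    qed
  qed
  then obtain A where A: "\<And>y x. cinner y (T x) = cinner (A y) x" by metis
  have A': "cinner (T x) y = cinner x (A y)" for x y
    by (metis A cinner_commute)
  have cA: "clinear_op A"
  proof (rule clinear_opI)
    show "A (y1 + y2) = A y1 + A y2" for y1 y2
      by (rule cinner_ext) (simp add: A'[symmetric] cinner_add_right)
    show "A (c *\<^sub>C y) = c *\<^sub>C A y" for c y
      by (rule cinner_ext) (simp add: A'[symmetric] cinner_scaleC_right)
  qed
  have "norm (A y) \<le> opnorm T * norm y" for y
  proof (cases "A y = 0")
    case True
    have "0 \<le> opnorm T" unfolding opnorm_def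
      by (rule onorm_pos_le[OF bounded_op_bounded_linear[OF T]])
    then show ?thesis using True by simp
  next
    case False
    have "(norm (A y))\<^sup>2 = Re (cinner (A y) (A y))" by (rule norm_sq_cinner)
    also have "cinner (A y) (A y) = cinner (T (A y)) y" by (simp add: A')
    also have "Re (cinner (T (A y)) y) \<le> cmod (cinner (T (A y)) y)" by (rule complex_Re_le_cmod)
    also have "\<dots> \<le> norm (T (A y)) * norm y" by (rule cauchy_schwarz)
    also have "\<dots> \<le> opnorm T * norm (A y) * norm y"
      by (intro mult_right_mono bounded_op_norm[OF T]) simp
    finally have "norm (A y) * norm (A y) \<le> (opnorm T * norm y) * norm (A y)"
      by (simp add: power2_eq_square mult_ac)
    then show ?thesis using False by simp
  qed
  then have "bounded_op A" by (intro bounded_opI[OF cA])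
  then show ?thesis using A' unfolding is_adj_def by blast
qed

lemma self_adjoint_sym:
  fixes T :: "'a::chilbert \<Rightarrow> 'a"
  assumes "self_adjoint_op T"
  shows "is_adj T T"
proof -
  have T: "bounded_op T" "adj T = T" using assms unfolding self_adjoint_op_def by auto
  obtain A where A: "is_adj T A" using adj_exists[OF T(1)] by blast
  then have "adj T = A" by (rule adj_eqI)
  then show ?thesis using A T by simp
qed

lemma is_adj_sym: "is_adj T A \<Longrightarrow> cinner (T x) y = cinner x (A y)"
  unfolding is_adj_def by auto

lemma is_adj_bounded: "is_adj T A \<Longrightarrow> bounded_op A"
  unfolding is_adj_def by auto

lemma bounded_op_comp:
  assumes A: "bounded_op A" and B: "bounded_op B"
  shows "bounded_op (\<lambda>x. A (B x))"
proof (rule bounded_opI)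
  show "clinear_op (\<lambda>x. A (B x))"
    using bounded_op_clinear[OF A] bounded_op_clinear[OF B]
    by (intro clinear_opI) (simp_all add: clinear_opD)
  show "norm (A (B x)) \<le> (opnorm A * opnorm B) * norm x" for x
  proof -
    have "norm (A (B x)) \<le> opnorm A * norm (B x)" by (rule bounded_op_norm[OF A])
    also have "\<dots> \<le> opnorm A * (opnorm B * norm x)"
      by (intro mult_left_mono bounded_op_norm[OF B])
        (simp add: opnorm_def onorm_pos_le[OF bounded_op_bounded_linear[OF A]])
    finally show ?thesis by (simp add: mult.assoc)
  qed
qed

lemma bounded_op_comp': "bounded_op A \<Longrightarrow> bounded_op B \<Longrightarrow> bounded_op (A \<circ> B)"
  using bounded_op_comp[of A B] by (simp add: comp_def)

lemma bounded_op_add: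
  assumes A: "bounded_op A" and B: "bounded_op B"
  shows "bounded_op (\<lambda>x. A x + B x)"
proof (rule bounded_opI)
  show "clinear_op (\<lambda>x. A x + B x)"
    using bounded_op_clinear[OF A] bounded_op_clinear[OF B]
    by (intro clinear_opI) (simp_all add: clinear_opD scaleC_add_right algebra_simps)
  show "norm (A x + B x) \<le> (opnorm A + opnorm B) * norm x" for x
    using norm_triangle_ineq[of "A x" "B x"] bounded_op_norm[OF A, of x] bounded_op_norm[OF B, of x]
    by (simp add: algebra_simps)
qed

lemma bounded_op_scale:
  assumes A: "bounded_op A"
  shows "bounded_op (\<lambda>x. c *\<^sub>C A x)"
proof (rule bounded_opI)
  show "clinear_op (\<lambda>x. c *\<^sub>C A x)"
    using bounded_op_clinear[OF A]
    by (intro clinear_opI) (simp_all add: clinear_opD scaleC_add_right scaleC_scaleC mult.commute)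
  show "norm (c *\<^sub>C A x) \<le> (cmod c * opnorm A) * norm x" for x
    using bounded_op_norm[OF A, of x] by (simp add: norm_scaleC mult.assoc mult_left_mono)
qed

lemma bounded_op_minus:
  assumes A: "bounded_op A"
  shows "bounded_op (\<lambda>x. - A x)"
  using bounded_op_scale[OF A, of "-1"] by (simp add: scaleC_minus_left)

lemma bounded_op_diff:
  assumes A: "bounded_op A" and B: "bounded_op B"
  shows "bounded_op (\<lambda>x. A x - B x)"
  using bounded_op_add[OF A bounded_op_minus[OF B]] by simp

lemma is_adj_scale:
  assumes "is_adj D A"
  shows "is_adj (\<lambda>x. c *\<^sub>C D x) (\<lambda>y. cnj c *\<^sub>C A y)"
  using assms unfolding is_adj_def
  by (auto simp: bounded_op_scale cinner_scaleC_left cinner_scaleC_right)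

lemma N_scale:
  assumes "is_norm_on_ops N" "bounded_op A"
  shows "N (\<lambda>x. c *\<^sub>C A x) = cmod c * N A"
  using assms unfolding is_norm_on_ops_def by blast

lemma N_nonneg:
  assumes "is_norm_on_ops N" "bounded_op A"
  shows "0 \<le> N A"
  using assms unfolding is_norm_on_ops_def by blast

lemma N_add:
  assumes "is_norm_on_ops N" "bounded_op A" "bounded_op B"
  shows "N (\<lambda>x. A x + B x) \<le> N A + N B"
  using assms unfolding is_norm_on_ops_def by blast

lemma SUP_max_eq:
  fixes f :: "real \<Rightarrow> real"
  assumes "\<And>t. f t \<le> M" "f tz = M"
  shows "(SUP t. f t) = M"
  by (rule cSup_eq_maximum) (use assms in \<open>auto intro: range_eqI[of _ _ tz]\<close>)

lemma wN_sym:
  assumes N: "is_norm_on_ops N" and D: "bounded_op D" and adjD: "is_adj D D"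
  shows "wN N D = N D"
proof -
  have R: "ReOp (\<lambda>x. cis t *\<^sub>C D x) = (\<lambda>x. complex_of_real (cos t) *\<^sub>C D x)" for t
  proof -
    have "adj (\<lambda>x. cis t *\<^sub>C D x) = (\<lambda>y. cnj (cis t) *\<^sub>C D y)"
      by (rule adj_eqI[OF is_adj_scale[OF adjD]])
    moreover have "(1/2) * (cis t + cnj (cis t)) = complex_of_real (cos t)"
      by (simp add: complex_eq_iff)
    ultimately show ?thesis
      unfolding ReOp_def by (simp add: scaleC_add_left[symmetric] scaleC_scaleC)
  qed
  have "wN N D = (SUP t. \<bar>cos t\<bar> * N D)"
    unfolding wN_def R using N_scale[OF N D] by simp
  also have "\<dots> = N D"
  proof (rule SUP_max_eq[where tz=0])
    show "\<bar>cos t\<bar> * N D \<le> N D" for t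
      using N_nonneg[OF N D] abs_cos_le_one[of t] by (simp add: mult_left_le_one_le)
  qed simp
  finally show ?thesis .
qed

lemma wN_skew:
  assumes N: "is_norm_on_ops N" and D: "bounded_op D" and adjD: "is_adj D (\<lambda>x. - D x)"
  shows "wN N D = N D"
proof -
  have R: "ReOp (\<lambda>x. cis t *\<^sub>C D x) = (\<lambda>x. (\<i> * complex_of_real (sin t)) *\<^sub>C D x)" for t
  proof -
    have "adj (\<lambda>x. cis t *\<^sub>C D x) = (\<lambda>y. cnj (cis t) *\<^sub>C (- D y))"
      by (rule adj_eqI[OF is_adj_scale[OF adjD]])
    moreover have "(1/2) * (cis t - cnj (cis t)) = \<i> * complex_of_real (sin t)"
      by (simp add: complex_eq_iff)
    ultimately show ?thesis
      unfolding ReOp_def by (simp add: scaleC_minus_right scaleC_diff_left[symmetric] scaleC_scaleC)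
  qed
  have "wN N D = (SUP t. \<bar>sin t\<bar> * N D)"
    unfolding wN_def R using N_scale[OF N D] by (simp add: norm_mult)
  also have "\<dots> = N D"
  proof (rule SUP_max_eq[where tz="pi/2"])
    show "\<bar>sin t\<bar> * N D \<le> N D" for t
      using N_nonneg[OF N D] abs_sin_le_one[of t] by (simp add: mult_left_le_one_le)
  qed simp
  finally show ?thesis .
qed

definition cc :: "nat \<Rightarrow> real" where "cc n = ((1/2) gchoose n) * (-1) ^ n"

lemma gchoose_Suc_rec: "(a::real) gchoose (Suc k) = (a gchoose k) * (a - of_nat k) / of_nat (Suc k)"
proof -
  have "(a gchoose (Suc k)) * fact (Suc k) = (\<Prod>i = 0..<Suc k. a - of_nat i)"
    by (rule gbinomial_mult_fact')
  also have "\<dots> = (\<Prod>i = 0..<k. a - of_nat i) * (a - of_nat k)" by simp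
  also have "(\<Prod>i = 0..<k. a - of_nat i) = (a gchoose k) * fact k"
    by (rule gbinomial_mult_fact'[symmetric])
  finally have "(a gchoose (Suc k)) * fact (Suc k) = (a gchoose k) * fact k * (a - of_nat k)" .
  then have "((a gchoose (Suc k)) * of_nat (Suc k)) * fact k = ((a gchoose k) * (a - of_nat k)) * fact k"
    by (simp only: fact_Suc of_nat_Suc) (simp add: algebra_simps)
  then have "(a gchoose (Suc k)) * of_nat (Suc k) = (a gchoose k) * (a - of_nat k)"
    by (subst (asm) mult_right_cancel) auto
  then show ?thesis
    by (simp add: eq_divide_eq del: of_nat_Suc)
qed

lemma cc_0[simp]: "cc 0 = 1" by (simp add: cc_def)

lemma cc_Suc: "cc (Suc n) = cc n * ((of_nat n - 1/2) / of_nat (Suc n))"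
  unfolding cc_def gchoose_Suc_rec by (simp add: field_simps)

lemma cc_nonpos: "n \<ge> 1 \<Longrightarrow> cc n \<le> 0"
proof (induction n)
  case 0 then show ?case by simp
next
  case (Suc n)
  show ?case
  proof (cases "n = 0")
    case True then show ?thesis by (simp add: cc_Suc)
  next
    case False
    then have "cc n \<le> 0" using Suc by simp
    moreover have "(of_nat n - 1/2) / of_nat (Suc n) \<ge> (0::real)" using False by simp
    ultimately show ?thesis unfolding cc_Suc by (rule mult_nonpos_nonneg)
  qed
qed

lemma cc_partial_nonneg: "(\<Sum>k\<le>m. cc k) \<ge> 0"
proof -
  have "(\<Sum>k\<le>m. cc k) = (-1) ^ m * ((1/2 - 1) gchoose m)"
    unfolding cc_def by (rule gbinomial_sum_lower_neg)
  also have "(1/2 - 1 :: real) = - (1/2)" by simp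
  also have "(- (1/2) gchoose m) = (-1) ^ m * ((1/2 + of_nat m - 1) gchoose m)"
    by (rule gbinomial_minus)
  finally have e: "(\<Sum>k\<le>m. cc k) = ((1/2 + of_nat m - 1 :: real) gchoose m)"
    by (simp flip: power_add add: power_even_eq[symmetric]) 
  have "((1/2 + of_nat m - 1 :: real) gchoose m) * fact m = (\<Prod>i = 0..<m. (1/2 + of_nat m - 1) - of_nat i)"
    by (rule gbinomial_mult_fact')
  also have "\<dots> \<ge> 0" by (intro prod_nonneg) auto
  finally have "((1/2 + of_nat m - 1 :: real) gchoose m) * fact m \<ge> 0" .
  then have "((1/2 + of_nat m - 1 :: real) gchoose m) \<ge> 0"
    using fact_gt_zero[of m, where 'a=real] by (auto simp: zero_le_mult_iff)
  then show ?thesis using e by simp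
qed

lemma cc_abs_partial: "(\<Sum>k<n. \<bar>cc k\<bar>) \<le> 2"
proof (cases n)
  case 0 then show ?thesis by simp
next
  case (Suc m)
  have "(\<Sum>k<n. \<bar>cc k\<bar>) = (\<Sum>k\<le>m. \<bar>cc k\<bar>)" using Suc by (simp add: lessThan_Suc_atMost)
  also have "\<dots> = 2 - (\<Sum>k\<le>m. cc k)"
  proof (induction m)
    case 0 then show ?case by simp
  next
    case (Suc m)
    have "\<bar>cc (Suc m)\<bar> = - cc (Suc m)" using cc_nonpos[of "Suc m"] by simp
    then show ?case using Suc.IH by simp
  qed
  also have "\<dots> \<le> 2" using cc_partial_nonneg[of m] by simp
  finally show ?thesis .
qed

lemma cc_abs_summable: "summable (\<lambda>n. \<bar>cc n\<bar>)"
  by (rule summableI_nonneg_bounded[where x=2]) (auto intro: cc_abs_partial)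

lemma cc_conv: "(\<Sum>i\<le>k. cc i * cc (k - i)) = (if k = 0 then 1 else if k = 1 then -1 else 0)"
proof -
  have "(\<Sum>i\<le>k. cc i * cc (k - i)) = (\<Sum>i\<le>k. ((1/2) gchoose i) * ((1/2) gchoose (k - i))) * (-1) ^ k"
    unfolding cc_def sum_distrib_right
    by (intro sum.cong refl) (simp add: power_add[symmetric] mult_ac)
  also have "(\<Sum>i\<le>k. ((1/2::real) gchoose i) * ((1/2) gchoose (k - i))) = (1/2 + 1/2) gchoose k"
    using gbinomial_Vandermonde[of "1/2::real" "1/2" k] by (simp add: atLeast0AtMost)
  also have "(1/2 + 1/2 :: real) gchoose k = of_nat (1 choose k)"
    using binomial_gbinomial[of 1 k, where 'a=real] by simp
  finally show ?thesis
    by (cases k) (auto simp: binomial_eq_0)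
qed

lemma Cauchy_product_sums_compose:
  fixes a b :: "nat \<Rightarrow> 'a::banach \<Rightarrow>\<^sub>L 'a"
  assumes a: "summable (\<lambda>k. norm (a k))"
    and b: "summable (\<lambda>k. norm (b k))"
  shows "(\<lambda>k. \<Sum>i\<le>k. a i o\<^sub>L b (k - i)) sums ((\<Sum>k. a k) o\<^sub>L (\<Sum>k. b k))"
proof -
  let ?S1 = "\<lambda>n::nat. {..<n} \<times> {..<n}"
  let ?S2 = "\<lambda>n::nat. {(i,j). i + j < n}"
  have S1_mono: "\<And>m n. m \<le> n \<Longrightarrow> ?S1 m \<subseteq> ?S1 n" by auto
  have S2_le_S1: "\<And>n. ?S2 n \<subseteq> ?S1 n" by auto
  have S1_le_S2: "\<And>n. ?S1 (n div 2) \<subseteq> ?S2 n" by auto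
  have finite_S1: "\<And>n. finite (?S1 n)" by simp
  with S2_le_S1 have finite_S2: "\<And>n. finite (?S2 n)" by (rule finite_subset)
  let ?g = "\<lambda>(i,j). a i o\<^sub>L b j"
  let ?f = "\<lambda>(i,j). norm (a i) * norm (b j)"
  have f_nonneg: "\<And>x. 0 \<le> ?f x" by auto
  then have norm_sum_f: "\<And>A. norm (sum ?f A) = sum ?f A"
    unfolding real_norm_def
    by (simp only: abs_of_nonneg sum_nonneg [rule_format])
  have prod_sum: "(sum a {..<n}) o\<^sub>L (sum b {..<n}) = sum ?g (?S1 n)" for n
    unfolding bounded_bilinear.sum_left[OF bounded_bilinear_blinfun_compose]
    unfolding bounded_bilinear.sum_right[OF bounded_bilinear_blinfun_compose]
    by (simp add: sum.cartesian_product)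
  have "(\<lambda>n. ((\<Sum>k<n. a k) o\<^sub>L (\<Sum>k<n. b k))) \<longlonglongrightarrow> ((\<Sum>k. a k) o\<^sub>L (\<Sum>k. b k))"
    by (intro bounded_bilinear.tendsto[OF bounded_bilinear_blinfun_compose]
        summable_LIMSEQ summable_norm_cancel [OF a] summable_norm_cancel [OF b])
  then have 1: "(\<lambda>n. sum ?g (?S1 n)) \<longlonglongrightarrow> ((\<Sum>k. a k) o\<^sub>L (\<Sum>k. b k))"
    by (simp only: prod_sum)
  have "(\<lambda>n. (\<Sum>k<n. norm (a k)) * (\<Sum>k<n. norm (b k))) \<longlonglongrightarrow> (\<Sum>k. norm (a k)) * (\<Sum>k. norm (b k))"
    using a b by (intro tendsto_mult summable_LIMSEQ)
  then have "(\<lambda>n. sum ?f (?S1 n)) \<longlonglongrightarrow> (\<Sum>k. norm (a k)) * (\<Sum>k. norm (b k))"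
    by (simp only: sum_product sum.Sigma [rule_format] finite_lessThan)
  then have "convergent (\<lambda>n. sum ?f (?S1 n))"
    by (rule convergentI)
  then have Cauchy: "Cauchy (\<lambda>n. sum ?f (?S1 n))"
    by (rule convergent_Cauchy)
  have "Zfun (\<lambda>n. sum ?f (?S1 n - ?S2 n)) sequentially"
  proof (rule ZfunI, simp only: eventually_sequentially norm_sum_f)
    fix r :: real
    assume r: "0 < r"
    from CauchyD [OF Cauchy r] obtain N
      where "\<forall>m\<ge>N. \<forall>n\<ge>N. norm (sum ?f (?S1 m) - sum ?f (?S1 n)) < r" ..
    then have "\<And>m n. N \<le> n \<Longrightarrow> n \<le> m \<Longrightarrow> norm (sum ?f (?S1 m - ?S1 n)) < r"
      by (simp only: sum_diff finite_S1 S1_mono)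
    then have N: "\<And>m n. N \<le> n \<Longrightarrow> n \<le> m \<Longrightarrow> sum ?f (?S1 m - ?S1 n) < r"
      by (simp only: norm_sum_f)
    show "\<exists>N. \<forall>n\<ge>N. sum ?f (?S1 n - ?S2 n) < r"
    proof (intro exI allI impI)
      fix n
      assume "2 * N \<le> n"
      then have n: "N \<le> n div 2" by simp
      have "sum ?f (?S1 n - ?S2 n) \<le> sum ?f (?S1 n - ?S1 (n div 2))"
        by (intro sum_mono2 finite_Diff finite_S1 f_nonneg Diff_mono subset_refl S1_le_S2)
      also have "\<dots> < r"
        using n div_le_dividend by (rule N)
      finally show "sum ?f (?S1 n - ?S2 n) < r" .
    qed
  qed
  then have "Zfun (\<lambda>n. sum ?g (?S1 n - ?S2 n)) sequentially"
    apply (rule Zfun_le [rule_format])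
    apply (simp only: norm_sum_f)
    apply (rule order_trans [OF norm_sum sum_mono])
    apply (auto simp add: norm_blinfun_compose)
    done
  then have 2: "(\<lambda>n. sum ?g (?S1 n) - sum ?g (?S2 n)) \<longlonglongrightarrow> 0"
    unfolding tendsto_Zfun_iff diff_0_right
    by (simp only: sum_diff finite_S1 S2_le_S1)
  with 1 have "(\<lambda>n. sum ?g (?S2 n)) \<longlonglongrightarrow> ((\<Sum>k. a k) o\<^sub>L (\<Sum>k. b k))"
    by (rule Lim_transform2)
  then show ?thesis
    by (simp only: sums_def sum.triangle_reindex)
qed

instance chilbert \<subseteq> banach ..

lemma bounded_linear_scaleC: "bounded_linear (\<lambda>x::'a::complex_inner. c *\<^sub>C x)"
  by (rule bounded_linear_intro[where K="cmod c"])
    (auto simp: scaleC_add_right scaleC_scaleR_comm norm_scaleC mult.commute)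

lemma bounded_linear_cinner_left: "bounded_linear (\<lambda>x::'a::complex_inner. cinner x y)"
  by (rule bounded_linear_intro[where K="norm y"])
    (auto simp: cinner_add_left cinner_scaleR_left scaleR_conv_of_real cauchy_schwarz)

lemma bounded_linear_cinner_right: "bounded_linear (\<lambda>y::'a::complex_inner. cinner x y)"
  by (rule bounded_linear_intro[where K="norm x"])
    (auto simp: cinner_add_right cinner_scaleR_right scaleR_conv_of_real,
      metis cauchy_schwarz mult.commute)

definition Pb :: "('a::chilbert \<Rightarrow> 'a) \<Rightarrow> 'a \<Rightarrow>\<^sub>L 'a" where
  "Pb T = Blinfun (\<lambda>x. T (T x))"

definition pw :: "('a::chilbert \<Rightarrow> 'a) \<Rightarrow> nat \<Rightarrow> 'a \<Rightarrow>\<^sub>L 'a" where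
  "pw T n = ((\<lambda>B. Pb T o\<^sub>L B) ^^ n) id_blinfun"

definition Rb :: "('a::chilbert \<Rightarrow> 'a) \<Rightarrow> 'a \<Rightarrow>\<^sub>L 'a" where
  "Rb T = (\<Sum>n. cc n *\<^sub>R pw T n)"

context
  fixes T :: "'a::chilbert \<Rightarrow> 'a"
  assumes Tadj: "is_adj T T" and Tb: "bounded_op T" and Tn: "opnorm T \<le> 1"
begin

lemma cT: "clinear_op T" using Tb by (rule bounded_op_clinear)

lemma Tle: "norm (T x) \<le> norm x"
proof -
  have "norm (T x) \<le> opnorm T * norm x" by (rule bounded_op_norm[OF Tb])
  also have "\<dots> \<le> 1 * norm x" using Tn by (intro mult_right_mono) auto
  finally show ?thesis by simp
qed

lemma blP: "bounded_linear (\<lambda>x. T (T x))"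
  by (rule bounded_op_bounded_linear[OF bounded_op_comp[OF Tb Tb]])

lemma Pb_apply[simp]: "blinfun_apply (Pb T) x = T (T x)"
  unfolding Pb_def by (simp add: bounded_linear_Blinfun_apply[OF blP])

lemma pw_0[simp]: "pw T 0 = id_blinfun" by (simp add: pw_def)

lemma pw_Suc: "pw T (Suc n) = Pb T o\<^sub>L pw T n" by (simp add: pw_def)

lemma pw_apply_Suc[simp]: "blinfun_apply (pw T (Suc n)) x = T (T (blinfun_apply (pw T n) x))"
  by (simp add: pw_Suc)

lemma norm_Pb: "norm (Pb T) \<le> 1"
  by (rule norm_blinfun_bound) (auto intro: order_trans[OF Tle Tle])

lemma norm_pw: "norm (pw T n) \<le> 1"
proof (induction n)
  case 0 then show ?case by (simp add: norm_blinfun_id_le)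
next
  case (Suc n)
  have "norm (pw T (Suc n)) \<le> norm (Pb T) * norm (pw T n)"
    unfolding pw_Suc by (rule norm_blinfun_compose)
  also have "\<dots> \<le> 1 * 1" using Suc norm_Pb by (intro mult_mono) auto
  finally show ?case by simp
qed

lemma pw_add_apply: "blinfun_apply (pw T (i + j)) x = blinfun_apply (pw T i) (blinfun_apply (pw T j) x)"
  by (induction i) auto

lemma pw_add: "pw T (i + j) = pw T i o\<^sub>L pw T j"
  by (rule blinfun_eqI) (simp add: pw_add_apply)

lemma pw_scaleC: "blinfun_apply (pw T n) (c *\<^sub>C x) = c *\<^sub>C blinfun_apply (pw T n) x"
  by (induction n) (auto simp: clinear_opD[OF cT])

lemma pw_T: "T (blinfun_apply (pw T n) x) = blinfun_apply (pw T n) (T x)"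
  by (induction n) auto

lemma pw_sym: "cinner (blinfun_apply (pw T n) x) y = cinner x (blinfun_apply (pw T n) y)"
proof (induction n arbitrary: x y)
  case 0 then show ?case by simp
next
  case (Suc n)
  have "cinner (T (T (pw T n x))) y = cinner (T (pw T n x)) (T y)" by (rule is_adj_sym[OF Tadj])
  also have "\<dots> = cinner (pw T n x) (T (T y))" by (rule is_adj_sym[OF Tadj])
  also have "\<dots> = cinner x (pw T n (T (T y)))" by (rule Suc.IH)
  finally have "cinner (T (T (pw T n x))) y = cinner x (pw T n (T (T y)))" .
  moreover have "pw T n (T (T y)) = T (T (pw T n y))" by (simp add: pw_T)
  ultimately show ?case by simp
qed

lemma summable_a: "summable (\<lambda>n. norm (cc n *\<^sub>R pw T n))"
proof (rule summable_comparison_test[OF _ cc_abs_summable])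
  show "\<exists>N. \<forall>n\<ge>N. norm (norm (cc n *\<^sub>R pw T n)) \<le> \<bar>cc n\<bar>"
    using norm_pw by (auto intro!: mult_left_le)
qed

lemma Rb_apply: "blinfun_apply (Rb T) x = (\<Sum>n. cc n *\<^sub>R blinfun_apply (pw T n) x)"
proof -
  have bl: "bounded_linear (\<lambda>B. blinfun_apply B x)"
    by (rule bounded_bilinear.bounded_linear_left[OF bounded_bilinear_blinfun_apply])
  have "blinfun_apply (Rb T) x = (\<Sum>n. blinfun_apply (cc n *\<^sub>R pw T n) x)"
    unfolding Rb_def by (rule bounded_linear.suminf[OF bl summable_norm_cancel[OF summable_a]])
  then show ?thesis by (simp add: blinfun.scaleR_left)
qed

lemma summable_ax: "summable (\<lambda>n. cc n *\<^sub>R blinfun_apply (pw T n) x)"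
proof -
  have bl: "bounded_linear (\<lambda>B. blinfun_apply B x)"
    by (rule bounded_bilinear.bounded_linear_left[OF bounded_bilinear_blinfun_apply])
  have "summable (\<lambda>n. blinfun_apply (cc n *\<^sub>R pw T n) x)"
    by (rule bounded_linear.summable[OF bl summable_norm_cancel[OF summable_a]])
  then show ?thesis by (simp add: blinfun.scaleR_left)
qed

lemma RR: "Rb T o\<^sub>L Rb T = id_blinfun - Pb T"
proof -
  have "(\<lambda>k. \<Sum>i\<le>k. (cc i *\<^sub>R pw T i) o\<^sub>L (cc (k - i) *\<^sub>R pw T (k - i))) sums (Rb T o\<^sub>L Rb T)"
    unfolding Rb_def by (rule Cauchy_product_sums_compose[OF summable_a summable_a])
  moreover have "(\<Sum>i\<le>k. (cc i *\<^sub>R pw T i) o\<^sub>L (cc (k - i) *\<^sub>R pw T (k - i)))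
      = (if k = 0 then 1 else if k = 1 then -1 else 0) *\<^sub>R pw T k" for k
  proof -
    have "(\<Sum>i\<le>k. (cc i *\<^sub>R pw T i) o\<^sub>L (cc (k - i) *\<^sub>R pw T (k - i)))
        = (\<Sum>i\<le>k. (cc i * cc (k - i)) *\<^sub>R pw T k)"
    proof (intro sum.cong refl)
      fix i assume "i \<in> {..k}"
      then have "pw T k = pw T i o\<^sub>L pw T (k - i)" using pw_add[of i "k - i"] by simp
      then show "(cc i *\<^sub>R pw T i) o\<^sub>L (cc (k - i) *\<^sub>R pw T (k - i)) = (cc i * cc (k - i)) *\<^sub>R pw T k"
        by (simp add: bounded_bilinear.scaleR_left[OF bounded_bilinear_blinfun_compose]
            bounded_bilinear.scaleR_right[OF bounded_bilinear_blinfun_compose])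
    qed
    also have "\<dots> = (\<Sum>i\<le>k. cc i * cc (k - i)) *\<^sub>R pw T k"
      by (simp add: scaleR_sum_left)
    finally show ?thesis by (simp add: cc_conv)
  qed
  ultimately have "(\<lambda>k. (if k = 0 then 1 else if k = 1 then -1 else 0) *\<^sub>R pw T k) sums (Rb T o\<^sub>L Rb T)"
    by simp
  moreover have "(\<lambda>k. (if k = 0 then 1 else if k = 1 then -1 else 0) *\<^sub>R pw T k) sums
      (\<Sum>k\<in>{0,1}. (if k = 0 then 1 else if k = 1 then -1 else 0) *\<^sub>R pw T k)"
    by (rule sums_finite) auto
  ultimately have "Rb T o\<^sub>L Rb T = (\<Sum>k\<in>{0,1}. (if k = 0 then 1 else if k = 1 then -1 else 0) *\<^sub>R pw T k)"
    using sums_unique2 by blast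
  also have "\<dots> = id_blinfun - Pb T"
    by (rule blinfun_eqI) (simp add: blinfun.diff_left)
  finally show ?thesis .
qed

abbreviation "R \<equiv> blinfun_apply (Rb T)"

lemma R_R: "R (R x) = x - T (T x)"
proof -
  have "R (R x) = blinfun_apply (Rb T o\<^sub>L Rb T) x" by simp
  also have "\<dots> = x - T (T x)" unfolding RR by (simp add: blinfun.diff_left)
  finally show ?thesis .
qed

lemma R_scaleC: "R (c *\<^sub>C x) = c *\<^sub>C R x"
proof -
  have "R (c *\<^sub>C x) = (\<Sum>n. c *\<^sub>C (cc n *\<^sub>R blinfun_apply (pw T n) x))"
    unfolding Rb_apply by (simp add: pw_scaleC scaleC_scaleR_comm)
  also have "\<dots> = c *\<^sub>C (\<Sum>n. cc n *\<^sub>R blinfun_apply (pw T n) x)"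
    by (rule bounded_linear.suminf[OF bounded_linear_scaleC summable_ax, symmetric])
  finally show ?thesis unfolding Rb_apply .
qed

lemma R_add: "R (x + y) = R x + R y"
  by (rule blinfun.add_right)

lemma clR: "clinear_op R"
  by (intro clinear_opI R_add R_scaleC)

lemma bR: "bounded_op R"
  by (rule bounded_opI[OF clR, where K="norm (Rb T)"]) (simp add: norm_blinfun)

lemma R_sym: "cinner (R x) y = cinner x (R y)"
proof -
  have "cinner (R x) y = (\<Sum>n. cinner (cc n *\<^sub>R blinfun_apply (pw T n) x) y)"
    unfolding Rb_apply using bounded_linear.suminf[OF bounded_linear_cinner_left[of y] summable_ax[of x]] by simp
  also have "\<dots> = (\<Sum>n. cinner x (cc n *\<^sub>R blinfun_apply (pw T n) y))"
    by (simp add: cinner_scaleR_left cinner_scaleR_right pw_sym)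
  also have "\<dots> = cinner x (R y)"
    unfolding Rb_apply using bounded_linear.suminf[OF bounded_linear_cinner_right[of x] summable_ax[of y]] by simp
  finally show ?thesis .
qed

lemma R_T: "T (R x) = R (T x)"
proof -
  have "T (R x) = (\<Sum>n. T (cc n *\<^sub>R blinfun_apply (pw T n) x))"
    unfolding Rb_apply using bounded_linear.suminf[OF bounded_op_bounded_linear[OF Tb] summable_ax[of x]] by simp
  also have "\<dots> = R (T x)"
    unfolding Rb_apply by (simp add: clinear_op_scaleR[OF cT] pw_T)
  finally show ?thesis .
qed

end

lemma unitary_half:
  fixes T :: "'a::chilbert \<Rightarrow> 'a"
  assumes Tadj: "is_adj T T" and Tb: "bounded_op T" and Tn: "opnorm T \<le> 1"
  shows "\<exists>U. unitary_op U \<and> bounded_op (adj U) \<and> T = (\<lambda>x. (1/2) *\<^sub>C (U x + adj U x))"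
proof -
  note cT = cT[OF Tadj Tb Tn]
  let ?R = "blinfun_apply (Rb T)"
  note R_R = R_R[OF Tadj Tb Tn] and R_add = R_add[OF Tadj Tb Tn] and R_scaleC = R_scaleC[OF Tadj Tb Tn]
    and R_T = R_T[OF Tadj Tb Tn] and R_sym = R_sym[OF Tadj Tb Tn] and bR = bR[OF Tadj Tb Tn]
  define U where "U = (\<lambda>x. T x + \<i> *\<^sub>C ?R x)"
  define V where "V = (\<lambda>x. T x - \<i> *\<^sub>C ?R x)"
  have bU: "bounded_op U" unfolding U_def by (intro bounded_op_add Tb bounded_op_scale bR)
  have bV: "bounded_op V" unfolding V_def by (intro bounded_op_diff Tb bounded_op_scale bR)
  have adjUV: "is_adj U V"
    unfolding is_adj_def
  proof (intro conjI allI bV)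
    fix x y
    show "cinner (U x) y = cinner x (V y)"
      unfolding U_def V_def
      by (simp add: cinner_add_left cinner_scaleC_left cinner_diff_right cinner_scaleC_right
          is_adj_sym[OF Tadj] R_sym)
  qed
  then have aU: "adj U = V" by (rule adj_eqI)
  have ii: "(\<i> * \<i>) *\<^sub>C z = - z" for z :: 'a
    by (simp add: scaleC_minus_left)
  have VU: "V (U x) = x" for x
  proof -
    have "V (U x) = T (T x) + \<i> *\<^sub>C T (?R x) - (\<i> *\<^sub>C ?R (T x) + (\<i> * \<i>) *\<^sub>C ?R (?R x))"
      unfolding U_def V_def
      by (simp add: clinear_opD[OF cT] R_add R_scaleC scaleC_add_right scaleC_scaleC)
    also have "\<dots> = x" unfolding ii R_R R_T by simp
    finally show ?thesis .
  qed
  have UV: "U (V x) = x" for x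
  proof -
    have "U (V x) = T (T x) - \<i> *\<^sub>C T (?R x) + (\<i> *\<^sub>C ?R (T x) - (\<i> * \<i>) *\<^sub>C ?R (?R x))"
      unfolding U_def V_def
      by (simp add: clinear_op_diff[OF cT] clinear_opD[OF cT] clinear_op_diff[OF clR[OF Tadj Tb Tn]]
          R_scaleC scaleC_diff_right scaleC_scaleC)
    also have "\<dots> = x" unfolding ii R_R R_T by simp
    finally show ?thesis .
  qed
  have unit: "unitary_op U"
    unfolding unitary_op_def aU using bU VU UV by (auto simp: fun_eq_iff)
  have half: "T = (\<lambda>x. (1/2) *\<^sub>C (U x + adj U x))"
  proof
    fix x
    have "(1/2) *\<^sub>C (U x + V x) = (1/2) *\<^sub>C T x + (1/2) *\<^sub>C T x"
      unfolding U_def V_def by (simp add: scaleC_add_right[symmetric])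
    also have "\<dots> = (1/2 + 1/2) *\<^sub>C T x" by (rule scaleC_add_left[symmetric])
    finally show "T x = (1/2) *\<^sub>C (U x + adj U x)" by (simp add: aU)
  qed
  show ?thesis using unit half bV aU by blast
qed

lemma N_le_half:
  fixes T :: "'a::chilbert \<Rightarrow> 'a"
  assumes N: "is_norm_on_ops N" and Tadj: "is_adj T T" and Tb: "bounded_op T" and Tn: "opnorm T \<le> 1"
  shows "\<exists>U. unitary_op U \<and> 2 * N T \<le> N U + N (adj U)"
proof -
  obtain U where U: "unitary_op U" "bounded_op (adj U)" "T = (\<lambda>x. (1/2) *\<^sub>C (U x + adj U x))"
    using unitary_half[OF Tadj Tb Tn] by blast
  have bU: "bounded_op U" using U(1) unfolding unitary_op_def by simp
  have "N T = N (\<lambda>x. (1/2) *\<^sub>C (\<lambda>x. U x + adj U x) x)" using U(3) by simp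
  also have "\<dots> = cmod (1/2) * N (\<lambda>x. U x + adj U x)"
    by (rule N_scale[OF N bounded_op_add[OF bU U(2)]])
  also have "\<dots> \<le> (1/2) * (N U + N (adj U))"
    using N_add[OF N bU U(2)] by simp
  finally show ?thesis using U(1) by (intro exI[of _ U]) simp
qed

lemma ereal_final:
  fixes a b w :: real and M :: ereal
  assumes "0 \<le> a" "0 \<le> b" "w \<le> 2 * a * b" "ereal (2 * a) \<le> M" "ereal (2 * b) \<le> M"
  shows "ereal w \<le> ereal (min a b) * M"
proof -
  have "ereal w \<le> ereal (min a b) * ereal (2 * max a b)"
    using assms(1-3) by (simp add: min_def max_def mult_ac)
  also have "\<dots> \<le> ereal (min a b) * M"
    using assms by (intro ereal_mult_left_mono) (auto simp: max_def)
  finally show ?thesis .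
qed

lemma ereal_final2:
  fixes a b w :: real and M :: ereal
  assumes "0 \<le> a" "0 \<le> b" "w \<le> 2 * a * b" "ereal a \<le> M" "ereal b \<le> M"
  shows "ereal w \<le> ereal (2 * min a b) * M"
proof -
  have "ereal w \<le> ereal (2 * min a b) * ereal (max a b)"
    using assms(1-3) by (simp add: min_def max_def mult_ac)
  also have "\<dots> \<le> ereal (2 * min a b) * M"
    using assms by (intro ereal_mult_left_mono) (auto simp: max_def)
  finally show ?thesis .
qed

theorem theorem2p6:
  fixes N :: "('a::chilbert \<Rightarrow> 'a) \<Rightarrow> real" and T S :: "'a \<Rightarrow> 'a"
  assumes "algebra_norm N" and "weakly_unitarily_invariant N"
    and "self_adjoint_op T" and "self_adjoint_op S"
    and "opnorm T \<le> 1" and "opnorm S \<le> 1"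
  shows "(ereal (wN N (\<lambda>x. T (S x) + S (T x)))
            \<le> ereal (min (wN N T) (wN N S)) * (SUP U\<in>{U. unitary_op U}. ereal (N U + N (adj U))))
       \<and> (ereal (wN N (\<lambda>x. T (S x) - S (T x)))
            \<le> ereal (min (wN N T) (wN N S)) * (SUP U\<in>{U. unitary_op U}. ereal (N U + N (adj U))))
       \<and> (selfadjoint_norm N \<longrightarrow>
            (ereal (wN N (\<lambda>x. T (S x) + S (T x)))
               \<le> ereal (2 * min (N T) (N S)) * (SUP U\<in>{U. unitary_op U}. ereal (N U)))
          \<and> (ereal (wN N (\<lambda>x. T (S x) - S (T x)))
               \<le> ereal (2 * min (N T) (N S)) * (SUP U\<in>{U. unitary_op U}. ereal (N U))))"
proof -
  have N: "is_norm_on_ops N" using assms(1) unfolding algebra_norm_def by simp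
  have Nmul: "N (A \<circ> B) \<le> N A * N B" if "bounded_op A" "bounded_op B" for A B
    using assms(1) that unfolding algebra_norm_def by blast
  have Tadj: "is_adj T T" by (rule self_adjoint_sym[OF assms(3)])
  have Sadj: "is_adj S S" by (rule self_adjoint_sym[OF assms(4)])
  have Tb: "bounded_op T" using assms(3) unfolding self_adjoint_op_def by simp
  have Sb: "bounded_op S" using assms(4) unfolding self_adjoint_op_def by simp
  have TS: "bounded_op (T \<circ> S)" by (rule bounded_op_comp'[OF Tb Sb])
  have ST: "bounded_op (S \<circ> T)" by (rule bounded_op_comp'[OF Sb Tb])
  have NT0: "0 \<le> N T" by (rule N_nonneg[OF N Tb])
  have NS0: "0 \<le> N S" by (rule N_nonneg[OF N Sb])
  have wT: "wN N T = N T" by (rule wN_sym[OF N Tb Tadj])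
  have wS: "wN N S = N S" by (rule wN_sym[OF N Sb Sadj])
  define DP where "DP = (\<lambda>x. T (S x) + S (T x))"
  define DM where "DM = (\<lambda>x. T (S x) - S (T x))"
  have DPe: "DP = (\<lambda>x. (T \<circ> S) x + (S \<circ> T) x)" by (simp add: DP_def)
  have DMe: "DM = (\<lambda>x. (T \<circ> S) x + (\<lambda>x. (-1) *\<^sub>C (S \<circ> T) x) x)"
    by (simp add: DM_def scaleC_minus_left)
  have bDP: "bounded_op DP" unfolding DPe by (intro bounded_op_add TS ST)
  have bDM: "bounded_op DM" unfolding DMe by (intro bounded_op_add TS ST bounded_op_scale)
  have aDP: "is_adj DP DP"
    unfolding is_adj_def
  proof (intro conjI allI bDP)
    fix x y
    show "cinner (DP x) y = cinner x (DP y)"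
      unfolding DP_def
      by (simp add: cinner_add_left cinner_add_right is_adj_sym[OF Tadj] is_adj_sym[OF Sadj] add.commute)
  qed
  have aDM: "is_adj DM (\<lambda>x. - DM x)"
    unfolding is_adj_def
  proof (intro conjI allI bounded_op_minus bDM)
    fix x y
    show "cinner (DM x) y = cinner x (- DM y)"
      unfolding DM_def
      by (simp add: cinner_diff_left cinner_diff_right cinner_minus_right is_adj_sym[OF Tadj] is_adj_sym[OF Sadj])
  qed
  have NDP: "wN N DP \<le> 2 * N T * N S"
  proof -
    have "wN N DP = N DP" by (rule wN_sym[OF N bDP aDP])
    also have "\<dots> \<le> N (T \<circ> S) + N (S \<circ> T)" unfolding DPe by (rule N_add[OF N TS ST])
    also have "\<dots> \<le> N T * N S + N S * N T" by (intro add_mono Nmul Tb Sb)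
    finally show ?thesis by (simp add: mult_ac)
  qed
  have NDM: "wN N DM \<le> 2 * N T * N S"
  proof -
    have "wN N DM = N DM" by (rule wN_skew[OF N bDM aDM])
    also have "\<dots> \<le> N (T \<circ> S) + N (\<lambda>x. (-1) *\<^sub>C (S \<circ> T) x)"
      unfolding DMe by (rule N_add[OF N TS bounded_op_scale[OF ST]])
    also have "N (\<lambda>x. (-1) *\<^sub>C (S \<circ> T) x) = N (S \<circ> T)" using N_scale[OF N ST, of "-1"] by simp
    also have "N (T \<circ> S) + N (S \<circ> T) \<le> N T * N S + N S * N T" by (intro add_mono Nmul Tb Sb)
    finally show ?thesis by (simp add: mult_ac)
  qed
  define M where "M = (SUP U\<in>{U. unitary_op U}. ereal (N U + N (adj U)))"
  define M' where "M' = (SUP U\<in>{U. unitary_op U}. ereal (N U))"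
  have MT: "ereal (2 * N X) \<le> M" if hX: "is_adj X X" "bounded_op X" "opnorm X \<le> 1" for X
  proof -
    obtain U where U: "unitary_op U" "2 * N X \<le> N U + N (adj U)"
      using N_le_half[OF N hX] by blast
    have "ereal (2 * N X) \<le> ereal (N U + N (adj U))" using U(2) by simp
    also have "\<dots> \<le> M" unfolding M_def using U(1) by (intro SUP_upper) simp
    finally show ?thesis .
  qed
  have M'T: "ereal (N X) \<le> M'" if sa: "selfadjoint_norm N" and hX: "is_adj X X" "bounded_op X" "opnorm X \<le> 1" for X
  proof -
    obtain U where U: "unitary_op U" "2 * N X \<le> N U + N (adj U)"
      using N_le_half[OF N hX] by blast
    have "bounded_op U" using U(1) unfolding unitary_op_def by simp
    then have "N (adj U) = N U" using sa unfolding selfadjoint_norm_def by blast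
    then have "ereal (N X) \<le> ereal (N U)" using U(2) by simp
    also have "\<dots> \<le> M'" unfolding M'_def using U(1) by (intro SUP_upper) simp
    finally show ?thesis .
  qed
  have 1: "ereal (wN N DP) \<le> ereal (min (wN N T) (wN N S)) * M"
    unfolding wT wS by (rule ereal_final[OF NT0 NS0 NDP MT[OF Tadj Tb assms(5)] MT[OF Sadj Sb assms(6)]])
  have 2: "ereal (wN N DM) \<le> ereal (min (wN N T) (wN N S)) * M"
    unfolding wT wS by (rule ereal_final[OF NT0 NS0 NDM MT[OF Tadj Tb assms(5)] MT[OF Sadj Sb assms(6)]])
  have 3: "selfadjoint_norm N \<longrightarrow> ereal (wN N DP) \<le> ereal (2 * min (N T) (N S)) * M' \<and>
      ereal (wN N DM) \<le> ereal (2 * min (N T) (N S)) * M'"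
  proof
    assume sa: "selfadjoint_norm N"
    show "ereal (wN N DP) \<le> ereal (2 * min (N T) (N S)) * M' \<and>
      ereal (wN N DM) \<le> ereal (2 * min (N T) (N S)) * M'"
      using ereal_final2[OF NT0 NS0 NDP M'T[OF sa Tadj Tb assms(5)] M'T[OF sa Sadj Sb assms(6)]]
        ereal_final2[OF NT0 NS0 NDM M'T[OF sa Tadj Tb assms(5)] M'T[OF sa Sadj Sb assms(6)]]
      by simp
  qed
  show ?thesis using 1 2 3 unfolding DP_def DM_def M_def M'_def by blast
qed

end
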